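(* Assume $H_0$ holds, i.e. $Z_1,\ldots,Z_n$ are i.i.d. with some (arbitrary) law $P_1$ on $\mathcal{Z}$, and the scores are produced by a symmetric transformation. Then: (i) $T_n=\mathbb{A}(R_1,\ldots,R_n)$ has the same distribution as $\mathbb{A}(\pi(1),\ldots,\pi(n))$, where $\pi$ is uniformly distributed over all permutations of $[n]=\{1,\ldots,n\}$; (ii) for every integer $B\ge 1$, the randomized p-value $p_B$ is uniformly distributed on $[0,1]$.
   Context: Let $Z_1,\ldots,Z_n$ be independent random elements of a measurable space $\mathcal{Z}$ and $\mathcal{D}=(Z_1,\ldots,Z_n)$. A measurable function $\mathbb{S}:\mathcal{Z}\times\mathcal{Z}^n\to\mathbb{R}$ is a symmetric transformation if $\mathbb{S}(z;\mathcal{D})=\mathbb{S}(z;\mathcal{D}_\pi)$ for every $z\in\mathcal{Z}$ and every permutation $\pi$ of $[n]$, where $\mathcal{D}_\pi=(Z_{\pi(1)},\ldots,Z_{\pi(n)})$. The scores are $S_i=\mathbb{S}(Z_i;\mathcal{D})+\epsilon e_i$, $i\in[n]$, where $\epsilon>0$ is a fixed constant and $e_1,\ldots,e_n$ are i.i.d. $\mathcal{N}(0,1)$ independent of the data (this breaks ties). The rank of $S_i$ is $R_i=|\{j\in[n]:S_j\le S_i\}|$. An aggregation function $\mathbb{A}$ maps vectors of ranks in $[n]^n$ to $\mathbb{R}$, and the test statistic is $T_n=\mathbb{A}(R_1,\ldots,R_n)$. For an integer $B\ge1$, let $\pi_1,\ldots,\pi_B$ be i.i.d. uniform random permutations of $[n]$,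 write $\mathbb{A}(\pi_b)=\mathbb{A}(\pi_b(1),\ldots,\pi_b(n))$, let $U\sim\mathcal{U}(0,1)$, with $\pi_1,\ldots,\pi_B,U$ mutually independent and independent of the data and of $(e_i)$, and define $p_B=\frac{\sum_{b=1}^B\mathbf{1}\{\mathbb{A}(\pi_b)>T_n\}+U\big[1+\sum_{b=1}^B\mathbf{1}\{\mathbb{A}(\pi_b)=T_n\}\big]}{B+1}.$ *)

theory Defs
  imports "HOL-Probability.Probability" "HOL-Combinatorics.Permutations"
begin

text \<open>Indices are [n] = {1..n}. Data sets D and noise vectors e are (extensional)
  functions on {1..n}; permutations of [n] are functions permuting {1..n}.\<close>

definition perms :: "nat \<Rightarrow> (nat \<Rightarrow> nat) set" where
  "perms n = {\<pi>. \<pi> permutes {1..n}}"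

definition unif_perm :: "nat \<Rightarrow> (nat \<Rightarrow> nat) measure" where
  "unif_perm n = measure_pmf (pmf_of_set (perms n))"

definition std_normal :: "real measure" where
  "std_normal = density lborel std_normal_density"

definition symmetric_transformation ::
  "nat \<Rightarrow> 'z measure \<Rightarrow> ('z \<Rightarrow> (nat \<Rightarrow> 'z) \<Rightarrow> real) \<Rightarrow> bool" where
  "symmetric_transformation n M S \<longleftrightarrow>
     (\<lambda>(z, D). S z D) \<in> borel_measurable (M \<Otimes>\<^sub>M PiM {1..n} (\<lambda>_. M)) \<and>
     (\<forall>z \<in> space M. \<forall>D \<in> space (PiM {1..n} (\<lambda>_. M)). \<forall>\<pi>. \<pi> permutes {1..n} \<longrightarrow>
        S z (D \<circ> \<pi>) = S z D)"

definition scores ::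
  "('z \<Rightarrow> (nat \<Rightarrow> 'z) \<Rightarrow> real) \<Rightarrow> real \<Rightarrow> (nat \<Rightarrow> 'z) \<Rightarrow> (nat \<Rightarrow> real) \<Rightarrow> nat \<Rightarrow> real" where
  "scores S \<epsilon> D e i = S (D i) D + \<epsilon> * e i"

definition rank :: "nat \<Rightarrow> (nat \<Rightarrow> real) \<Rightarrow> nat \<Rightarrow> nat" where
  "rank n s i = card {j \<in> {1..n}. s j \<le> s i}"

definition vec_list :: "nat \<Rightarrow> (nat \<Rightarrow> 'a) \<Rightarrow> 'a list" where
  "vec_list n v = map v [1..<n+1]"

definition test_stat ::
  "nat \<Rightarrow> (nat list \<Rightarrow> real) \<Rightarrow> ('z \<Rightarrow> (nat \<Rightarrow> 'z) \<Rightarrow> real) \<Rightarrow> real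
     \<Rightarrow> (nat \<Rightarrow> 'z) \<Rightarrow> (nat \<Rightarrow> real) \<Rightarrow> real" where
  "test_stat n A S \<epsilon> D e = A (vec_list n (rank n (scores S \<epsilon> D e)))"

text \<open>Randomized permutation p-value p_B, given T_n = t, permutations P b (b in 1..B) and U = u.\<close>
definition pval ::
  "nat \<Rightarrow> nat \<Rightarrow> (nat list \<Rightarrow> real) \<Rightarrow> real \<Rightarrow> (nat \<Rightarrow> nat \<Rightarrow> nat) \<Rightarrow> real \<Rightarrow> real" where
  "pval n B A t P u =
     (real (card {b \<in> {1..B}. A (vec_list n (P b)) > t})
      + u * (1 + real (card {b \<in> {1..B}. A (vec_list n (P b)) = t}))) / (real B + 1)"

definition data_noise :: "nat \<Rightarrow> 'z measure \<Rightarrow> ((nat \<Rightarrow> 'z) \<times> (nat \<Rightarrow> real)) measure" where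
  "data_noise n P1 = PiM {1..n} (\<lambda>_. P1) \<Otimes>\<^sub>M PiM {1..n} (\<lambda>_. std_normal)"

definition full_space ::
  "nat \<Rightarrow> nat \<Rightarrow> 'z measure \<Rightarrow> (((nat \<Rightarrow> 'z) \<times> (nat \<Rightarrow> real)) \<times> (nat \<Rightarrow> nat \<Rightarrow> nat) \<times> real) measure" where
  "full_space n B P1 = data_noise n P1 \<Otimes>\<^sub>M
     (PiM {1..B} (\<lambda>_. unif_perm n) \<Otimes>\<^sub>M uniform_measure lborel {0..1})"

end

theory Submission
  imports Defs
begin

lemma std_normal_prob: "prob_space std_normal"
  using real_dist_normal_dist unfolding std_normal_def real_distribution_def by simp

lemma std_normal_sets[simp]: "sets std_normal = sets borel"
  unfolding std_normal_def by simp

lemma std_normal_single: "emeasure std_normal {a} = 0"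
  unfolding std_normal_def
  by (simp add: emeasure_density nn_integral_null_set)

lemma rank_comp:
  assumes p: "\<pi> permutes {1..n}" and i: "i \<in> {1..n}"
  shows "rank n (s \<circ> \<pi>) i = rank n s (\<pi> i)"
proof -
  have pin: "\<And>x. x \<in> {1..n} \<Longrightarrow> \<pi> x \<in> {1..n}" using permutes_in_image[OF p] by blast
  have "\<pi> ` {j \<in> {1..n}. s (\<pi> j) \<le> s (\<pi> i)} = {j \<in> {1..n}. s j \<le> s (\<pi> i)}"
  proof (rule subset_antisym; rule subsetI)
    fix x assume "x \<in> \<pi> ` {j \<in> {1..n}. s (\<pi> j) \<le> s (\<pi> i)}"
    then obtain y where "y \<in> {1..n}" "s (\<pi> y) \<le> s (\<pi> i)" "x = \<pi> y" by blast
    then show "x \<in> {j \<in> {1..n}. s j \<le> s (\<pi> i)}" using pin[of y] by simp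
  next
    fix j assume "j \<in> {j \<in> {1..n}. s j \<le> s (\<pi> i)}"
    hence j: "j \<in> {1..n}" "s j \<le> s (\<pi> i)" by auto
    have "inv \<pi> j \<in> {1..n}" using permutes_in_image[OF permutes_inv[OF p]] j by blast
    moreover have "\<pi> (inv \<pi> j) = j" using permutes_inverses(1)[OF p] by simp
    ultimately show "j \<in> \<pi> ` {j \<in> {1..n}. s (\<pi> j) \<le> s (\<pi> i)}"
      using j by (metis (mono_tags, lifting) image_eqI mem_Collect_eq)
  qed
  moreover have "inj_on \<pi> {j \<in> {1..n}. s (\<pi> j) \<le> s (\<pi> i)}"
    using permutes_inj[OF p] inj_on_subset subset_UNIV by blast
  ultimately have "card {j \<in> {1..n}. s (\<pi> j) \<le> s (\<pi> i)} = card {j \<in> {1..n}. s j \<le> s (\<pi> i)}"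
    using card_image[of \<pi> "{j \<in> {1..n}. s (\<pi> j) \<le> s (\<pi> i)}"] by simp
  thus ?thesis unfolding rank_def by simp
qed

lemma rank_perm:
  assumes inj: "inj_on s {1..n}"
  shows "(\<lambda>i. if i \<in> {1..n} then rank n s i else i) permutes {1..n}"
proof (rule bij_imp_permutes)
  let ?r = "\<lambda>i. if i \<in> {1..n} then rank n s i else i"
  have into: "?r i \<in> {1..n}" if "i \<in> {1..n}" for i
proof -
    have "i \<in> {j \<in> {1..n}. s j \<le> s i}" using that by auto
    hence "{j \<in> {1..n}. s j \<le> s i} \<noteq> {}" by blast
    hence "card {j \<in> {1..n}. s j \<le> s i} > 0" by (simp add: card_gt_0_iff)
    moreover have "card {j \<in> {1..n}. s j \<le> s i} \<le> card {1..n}" by (rule card_mono) auto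
    ultimately show ?thesis using that by (auto simp: rank_def)
  qed
  have injr: "inj_on ?r {1..n}"
  proof (rule inj_onI)
    fix i k assume ik: "i \<in> {1..n}" "k \<in> {1..n}" "?r i = ?r k"
    show "i = k"
    proof (rule ccontr)
      assume "i \<noteq> k"
      hence ne: "s i \<noteq> s k" using inj ik(1,2) unfolding inj_on_def by blast
      have strict: "rank n s a < rank n s b" if "a \<in> {1..n}" "b \<in> {1..n}" "s a < s b" for a b
      proof -
        have "{j \<in> {1..n}. s j \<le> s a} \<subseteq> {j \<in> {1..n}. s j \<le> s b}"
          using that by auto
        moreover have "b \<in> {j \<in> {1..n}. s j \<le> s b}" "b \<notin> {j \<in> {1..n}. s j \<le> s a}"
          using that by auto
        ultimately have "{j \<in> {1..n}. s j \<le> s a} \<subset> {j \<in> {1..n}. s j \<le> s b}"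
          by blast
        thus ?thesis unfolding rank_def by (intro psubset_card_mono) auto
      qed
      show False
      proof (cases "s i < s k")
        case True thus False using strict[of i k] ik by simp
      next
        case False hence "s k < s i" using ne by auto
        thus False using strict[of k i] ik by simp
      qed
    qed
  qed
  have "card (?r ` {1..n}) = card {1..n}" by (rule card_image[OF injr])
  moreover have "?r ` {1..n} \<subseteq> {1..n}" using into by blast
  ultimately have "?r ` {1..n} = {1..n}" by (meson card_subset_eq finite_atLeastAtMost)
  thus "bij_betw ?r {1..n} {1..n}" using injr by (simp add: bij_betw_def)
qed auto

lemma comp_perm_meas_eq:
  assumes p: "\<pi> permutes I" and D: "D \<in> space (PiM I M)"
  shows "D \<circ> \<pi> = (\<lambda>n\<in>I. D (\<pi> n))"
proof
  fix x show "(D \<circ> \<pi>) x = (\<lambda>n\<in>I. D (\<pi> n)) x"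
  proof (cases "x \<in> I")
    case False
    hence "\<pi> x = x" using p by (simp add: permutes_not_in)
    moreover have "D x = undefined" using D False by (auto simp: space_PiM PiE_def extensional_def)
    ultimately show ?thesis using False by simp
  qed simp
qed

lemma comp_perm_measurable:
  assumes p: "\<pi> permutes I"
  shows "(\<lambda>D. D \<circ> \<pi>) \<in> measurable (PiM I (\<lambda>_. M)) (PiM I (\<lambda>_. M))"
proof -
  have "(\<lambda>D. \<lambda>n\<in>I. D (\<pi> n)) \<in> measurable (PiM I (\<lambda>_. M)) (PiM I (\<lambda>_. M))"
    using p by (intro measurable_restrict measurable_component_singleton) (auto simp: permutes_in_image)
  thus ?thesis
    by (rule measurable_cong[THEN iffD2, rotated]) (simp add: comp_perm_meas_eq[OF p])
qed

lemma PiM_perm_inv: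
  assumes M: "prob_space M" and p: "\<pi> permutes I"
  shows "distr (PiM I (\<lambda>_. M)) (PiM I (\<lambda>_. M)) (\<lambda>D. D \<circ> \<pi>) = PiM I (\<lambda>_. M)"
proof -
  have "distr (PiM I (\<lambda>_. M)) (PiM I (\<lambda>_. M)) (\<lambda>D. \<lambda>n\<in>I. D (\<pi> n)) = PiM I (\<lambda>_. M)"
    using distr_PiM_reindex[of I "\<lambda>_. M" \<pi> I] M p
    by (simp add: permutes_inj_on permutes_in_image Pi_iff)
  moreover have "distr (PiM I (\<lambda>_. M)) (PiM I (\<lambda>_. M)) (\<lambda>D. D \<circ> \<pi>)
      = distr (PiM I (\<lambda>_. M)) (PiM I (\<lambda>_. M)) (\<lambda>D. \<lambda>n\<in>I. D (\<pi> n))"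
    by (rule distr_cong) (simp_all add: comp_perm_meas_eq[OF p])
  ultimately show ?thesis by simp
qed

lemma data_noise_prob: "prob_space P1 \<Longrightarrow> prob_space (data_noise n P1)"
  unfolding data_noise_def
  by (intro prob_space_pair prob_space_PiM std_normal_prob) auto

lemma data_noise_inv:
  assumes P1: "prob_space P1" and p: "\<pi> permutes {1..n}"
  shows "distr (data_noise n P1) (data_noise n P1) (\<lambda>(D, e). (D \<circ> \<pi>, e \<circ> \<pi>)) = data_noise n P1"
proof -
  let ?A = "PiM {1..n} (\<lambda>_. P1)" and ?B = "PiM {1..n} (\<lambda>_. std_normal)"
  have sf: "sigma_finite_measure (distr ?B ?B (\<lambda>e. e \<circ> \<pi>))"
    using PiM_perm_inv[OF std_normal_prob p]
    by (simp add: prob_space_PiM std_normal_prob prob_space_imp_sigma_finite)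
  have "distr ?A ?A (\<lambda>D. D \<circ> \<pi>) \<Otimes>\<^sub>M distr ?B ?B (\<lambda>e. e \<circ> \<pi>)
      = distr (?A \<Otimes>\<^sub>M ?B) (?A \<Otimes>\<^sub>M ?B) (\<lambda>(D, e). (D \<circ> \<pi>, e \<circ> \<pi>))"
    by (rule pair_measure_distr[OF comp_perm_measurable[OF p] comp_perm_measurable[OF p] sf])
  thus ?thesis unfolding data_noise_def
    using PiM_perm_inv[OF std_normal_prob p] PiM_perm_inv[OF P1 p] by simp
qed

lemma tie_null_normal:
  assumes I: "finite I" "i \<in> I" "j \<in> I" "i \<noteq> j"
  shows "emeasure (PiM I (\<lambda>_. std_normal)) {e \<in> space (PiM I (\<lambda>_. std_normal)). e i = a + e j} = 0"
proof -
  let ?N = std_normal and ?J = "I - {i}"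
  interpret N: prob_space ?N by (rule std_normal_prob)
  interpret J: prob_space "PiM ?J (\<lambda>_. ?N)" by (intro prob_space_PiM std_normal_prob)
  interpret NJ: pair_sigma_finite ?N "PiM ?J (\<lambda>_. ?N)" by unfold_locales
  have ins: "insert i ?J = I" using I by auto
  have d: "distr (?N \<Otimes>\<^sub>M PiM ?J (\<lambda>_. ?N)) (PiM I (\<lambda>_. ?N)) (\<lambda>(x, X). X(i := x)) = PiM I (\<lambda>_. ?N)"
    using distr_pair_PiM_eq_PiM[of ?J "\<lambda>_. ?N" i] std_normal_prob ins by simp
  have meas: "(\<lambda>(x, X). X(i := x)) \<in> measurable (?N \<Otimes>\<^sub>M PiM ?J (\<lambda>_. ?N)) (PiM I (\<lambda>_. ?N))"
proof -
    have eq: "(\<lambda>(x, X). X(i := x)) = (\<lambda>\<omega> k. if k = i then fst \<omega> else snd \<omega> k)"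
      by (auto simp: fun_eq_iff)
    have "(\<lambda>\<omega> k. if k = i then fst \<omega> else snd \<omega> k) \<in> measurable (?N \<Otimes>\<^sub>M PiM ?J (\<lambda>_. ?N)) (PiM I (\<lambda>_. ?N))"
    proof (rule measurable_PiM_single')
      fix k assume k: "k \<in> I"
      show "(\<lambda>\<omega>. if k = i then fst \<omega> else snd \<omega> k) \<in> measurable (?N \<Otimes>\<^sub>M PiM ?J (\<lambda>_. ?N)) ?N"
      proof (cases "k = i")
        case True thus ?thesis by simp
      next
        case False
        hence "(\<lambda>\<omega>. snd \<omega> k) \<in> measurable (?N \<Otimes>\<^sub>M PiM ?J (\<lambda>_. ?N)) ?N"
          using k by (intro measurable_compose[OF measurable_snd measurable_component_singleton]) auto
        thus ?thesis using False by simp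
      qed
    next
      show "(\<lambda>\<omega> k. if k = i then fst \<omega> else snd \<omega> k) \<in> space (?N \<Otimes>\<^sub>M PiM ?J (\<lambda>_. ?N)) \<rightarrow> (\<Pi>\<^sub>E k\<in>I. space ?N)"
        using I by (auto simp: space_pair_measure space_PiM PiE_def extensional_def)
    qed
    thus ?thesis unfolding eq .
  qed
  let ?Z = "{e \<in> space (PiM I (\<lambda>_. std_normal)). e i = a + e j}"
  have ci: "(\<lambda>x. x k) \<in> borel_measurable (PiM I (\<lambda>_. ?N))" if "k \<in> I" for k
    using measurable_component_singleton[OF that, of "\<lambda>_. ?N"]
    by (simp add: measurable_cong_sets[OF refl std_normal_sets])
  have Z: "?Z \<in> sets (PiM I (\<lambda>_. ?N))"
    using ci[OF I(2)] ci[OF I(3)] by measurable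
  let ?W = "(\<lambda>(x, X). X(i := x)) -` ?Z \<inter> space (?N \<Otimes>\<^sub>M PiM ?J (\<lambda>_. ?N))"
  have W: "?W \<in> sets (?N \<Otimes>\<^sub>M PiM ?J (\<lambda>_. ?N))"
    using meas Z by (rule measurable_sets)
  have "emeasure (PiM I (\<lambda>_. ?N)) ?Z = emeasure (?N \<Otimes>\<^sub>M PiM ?J (\<lambda>_. ?N)) ?W"
    by (subst d[symmetric]) (rule emeasure_distr[OF meas Z])
  also have "\<dots> = (\<integral>\<^sup>+X. emeasure ?N ((\<lambda>x. (x, X)) -` ?W) \<partial>PiM ?J (\<lambda>_. ?N))"
    by (rule NJ.emeasure_pair_measure_alt2[OF W])
  also have "\<dots> = (\<integral>\<^sup>+X. 0 \<partial>PiM ?J (\<lambda>_. ?N))"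
  proof (rule nn_integral_cong)
    fix X
    have "(\<lambda>x. (x, X)) -` ?W \<subseteq> {a + X j}" using I by auto
    hence "emeasure ?N ((\<lambda>x. (x, X)) -` ?W) \<le> emeasure ?N {a + X j}"
      by (intro emeasure_mono) auto
    thus "emeasure ?N ((\<lambda>x. (x, X)) -` ?W) = 0" using std_normal_single by simp
  qed
  finally show ?thesis by simp
qed

definition clamp01 :: "real \<Rightarrow> real" where "clamp01 z = max 0 (min z 1)"

lemma card_filter_real_measurable:
  assumes "finite I" "\<And>b. b \<in> I \<Longrightarrow> {\<omega> \<in> space M. P b \<omega>} \<in> sets M"
  shows "(\<lambda>\<omega>. real (card {b\<in>I. P b \<omega>})) \<in> borel_measurable M"
proof -
  have eq: "real (card {b\<in>I. P b \<omega>}) = (\<Sum>b\<in>I. indicator {\<omega> \<in> space M. P b \<omega>} \<omega>)" if "\<omega> \<in> space M" for \<omega>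
proof -
    have "real (card {b\<in>I. P b \<omega>}) = (\<Sum>b\<in>{b\<in>I. P b \<omega>}. 1)" by simp
    also have "\<dots> = (\<Sum>b\<in>I. if P b \<omega> then 1 else 0)"
      by (rule sum.inter_filter[OF assms(1)])
    also have "\<dots> = (\<Sum>b\<in>I. indicator {\<omega> \<in> space M. P b \<omega>} \<omega>)"
      using that by (intro sum.cong) (auto simp: indicator_def)
    finally show ?thesis .
  qed
  have "(\<lambda>\<omega>. \<Sum>b\<in>I. indicator {\<omega> \<in> space M. P b \<omega>} \<omega> :: real) \<in> borel_measurable M"
    using assms(2) by (intro borel_measurable_sum borel_measurable_indicator) auto
  thus ?thesis by (rule measurable_cong[THEN iffD2, rotated]) (simp add: eq)
qed

lemma fun_upd_PiM_measurable:
  "(\<lambda>(x, X). X(i := x)) \<in> measurable (N \<Otimes>\<^sub>M PiM J (\<lambda>_. N)) (PiM (insert i J) (\<lambda>_. N))"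
proof -
  have eq: "(\<lambda>(x, X). X(i := x)) = (\<lambda>\<omega> k. if k = i then fst \<omega> else snd \<omega> k)"
    by (auto simp: fun_eq_iff)
  have "(\<lambda>\<omega> k. if k = i then fst \<omega> else snd \<omega> k) \<in> measurable (N \<Otimes>\<^sub>M PiM J (\<lambda>_. N)) (PiM (insert i J) (\<lambda>_. N))"
  proof (rule measurable_PiM_single')
    fix k assume k: "k \<in> insert i J"
    show "(\<lambda>\<omega>. if k = i then fst \<omega> else snd \<omega> k) \<in> measurable (N \<Otimes>\<^sub>M PiM J (\<lambda>_. N)) N"
    proof (cases "k = i")
      case True thus ?thesis by simp
    next
      case False
      hence "(\<lambda>\<omega>. snd \<omega> k) \<in> measurable (N \<Otimes>\<^sub>M PiM J (\<lambda>_. N)) N"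
        using k by (intro measurable_compose[OF measurable_snd measurable_component_singleton]) auto
      thus ?thesis using False by simp
    qed
  next
    show "(\<lambda>\<omega> k. if k = i then fst \<omega> else snd \<omega> k) \<in> space (N \<Otimes>\<^sub>M PiM J (\<lambda>_. N)) \<rightarrow> (\<Pi>\<^sub>E k\<in>insert i J. space N)"
      by (auto simp: space_pair_measure space_PiM PiE_def extensional_def)
  qed
  thus ?thesis unfolding eq .
qed

lemma unif_Iic: "emeasure (uniform_measure lborel {0..1::real}) {..c} = ennreal (clamp01 c)"
proof -
  have "emeasure (uniform_measure lborel {0..1::real}) {..c} = emeasure lborel ({0..1} \<inter> {..c}) / emeasure lborel {0..1::real}"
    by (rule emeasure_uniform_measure) auto
  also have "emeasure lborel {0..1::real} = 1" by simp
  also have "emeasure lborel ({0..1} \<inter> {..c}) = ennreal (clamp01 c)"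
  proof (cases "c < 0")
    case True
    hence "{0..1} \<inter> {..c} = {}" by auto
    thus ?thesis using True by (simp add: clamp01_def)
  next
    case False
    hence "{0..1} \<inter> {..c} = {0..min c 1}" by auto
    moreover have "clamp01 c = min c 1" using False by (simp add: clamp01_def)
    ultimately show ?thesis using False by simp
  qed
  finally show ?thesis by (simp add: divide_ennreal_def)
qed

lemma unif_prob: "prob_space (uniform_measure lborel {0..1::real})"
  by (intro prob_space_uniform_measure) auto

lemma unif_cdf: "measure (uniform_measure lborel {0..1::real}) {..c} = clamp01 c"
  unfolding measure_def unif_Iic by (rule enn2real_ennreal) (simp add: clamp01_def)

lemma clamp_sum_identity:
  fixes y :: "nat \<Rightarrow> real"
  assumes "finite I"
  shows "(\<Sum>k\<in>I. clamp01 ((t - real (card {l\<in>I. y l > y k})) / real (card {l\<in>I. y l = y k})))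
         = max 0 (min t (real (card I)))"
  using assms
proof (induction "card I" arbitrary: I t rule: less_induct)
  case less
  show ?case
  proof (cases "I = {}")
    case True thus ?thesis by simp
  next
    case False
    define v where "v = Max (y ` I)"
    define C where "C = {l\<in>I. y l = v}"
    define I' where "I' = I - C"
    have fin: "finite C" "finite I'" using less.prems by (auto simp: C_def I'_def)
    have vin: "v \<in> y ` I" unfolding v_def using False less.prems by simp
    have vmax: "y l \<le> v" if "l \<in> I" for l unfolding v_def using less.prems that by simp
    have Cne: "C \<noteq> {}" using vin by (auto simp: C_def)
    hence mpos: "card C > 0" using fin by auto
    have IC: "I = C \<union> I'" "C \<inter> I' = {}" by (auto simp: C_def I'_def)
    have cardI: "card I = card C + card I'" using IC fin by (simp add: card_Un_disjoint)
    have lt: "card I' < card I" using cardI mpos by simp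
    have I'lt: "y k < v" if "k \<in> I'" for k using that vmax by (force simp: C_def I'_def)
    let ?f = "\<lambda>J k. clamp01 ((t - real (card {l\<in>J. y l > y k})) / real (card {l\<in>J. y l = y k}))"
    have sC: "(\<Sum>k\<in>C. ?f I k) = max 0 (min t (real (card C)))"
    proof -
      have "?f I k = clamp01 (t / real (card C))" if "k \<in> C" for k
      proof -
        have "{l\<in>I. y l > y k} = {}" using that vmax by (force simp: C_def)
        hence "card {l\<in>I. y l > y k} = 0" by (simp only: card.empty)
        moreover have "{l\<in>I. y l = y k} = C" using that by (auto simp: C_def)
        ultimately show ?thesis by (simp only: of_nat_0 diff_zero)
      qed
      hence "(\<Sum>k\<in>C. ?f I k) = real (card C) * clamp01 (t / real (card C))" by simp
      also have "\<dots> = max 0 (min t (real (card C)))"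
        using mpos by (auto simp: clamp01_def max_def min_def field_simps)
      finally show ?thesis .
    qed
    have sI': "(\<Sum>k\<in>I'. ?f I k) = max 0 (min (t - real (card C)) (real (card I')))"
    proof -
      have "?f I k = clamp01 ((t - real (card C) - real (card {l\<in>I'. y l > y k})) / real (card {l\<in>I'. y l = y k}))"
        if k: "k \<in> I'" for k
      proof -
        have "{l\<in>I. y l > y k} = C \<union> {l\<in>I'. y l > y k}"
          using I'lt[OF k] by (auto simp: C_def I'_def)
        moreover have "C \<inter> {l\<in>I'. y l > y k} = {}" by (auto simp: I'_def)
        ultimately have "card {l\<in>I. y l > y k} = card C + card {l\<in>I'. y l > y k}"
          using fin by (simp add: card_Un_disjoint)
        moreover have "{l\<in>I. y l = y k} = {l\<in>I'. y l = y k}"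
          using I'lt[OF k] by (auto simp: C_def I'_def)
        ultimately show ?thesis by (simp add: algebra_simps)
      qed
      hence "(\<Sum>k\<in>I'. ?f I k) = (\<Sum>k\<in>I'. clamp01 ((t - real (card C) - real (card {l\<in>I'. y l > y k})) / real (card {l\<in>I'. y l = y k})))"
        by (rule sum.cong[OF refl])
      also have "\<dots> = max 0 (min (t - real (card C)) (real (card I')))"
        by (rule less.hyps[OF lt fin(2)])
      finally show ?thesis .
    qed
    have "(\<Sum>k\<in>I. ?f I k) = (\<Sum>k\<in>C. ?f I k) + (\<Sum>k\<in>I'. ?f I k)"
      using IC fin by (simp add: sum.union_disjoint)
    also have "\<dots> = max 0 (min t (real (card I)))"
      using sC sI' cardI mpos by (simp add: max_def min_def)
    finally show ?thesis .
  qed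
qed

definition phi :: "nat \<Rightarrow> real \<Rightarrow> nat \<Rightarrow> (nat \<Rightarrow> real) \<Rightarrow> real" where
  "phi B x k y = clamp01 (((real B + 1) * x - real (card {l\<in>{0..B}. y l > y k})) / real (card {l\<in>{0..B}. y l = y k}))"

lemma card_perm_filter:
  assumes p: "\<sigma> permutes I"
  shows "card {l\<in>I. P (\<sigma> l)} = card {l\<in>I. P l}"
proof -
  have pin: "\<And>x. x \<in> I \<Longrightarrow> \<sigma> x \<in> I" using permutes_in_image[OF p] by blast
  have "\<sigma> ` {l\<in>I. P (\<sigma> l)} = {l\<in>I. P l}"
  proof (rule subset_antisym; rule subsetI)
    fix x assume "x \<in> \<sigma> ` {l\<in>I. P (\<sigma> l)}"
    then obtain y where "y \<in> I" "P (\<sigma> y)" "x = \<sigma> y" by blast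
    then show "x \<in> {l\<in>I. P l}" using pin[of y] by simp
  next
    fix j assume "j \<in> {l\<in>I. P l}"
    hence j: "j \<in> I" "P j" by auto
    have "inv \<sigma> j \<in> I" using permutes_in_image[OF permutes_inv[OF p]] j by blast
    moreover have "\<sigma> (inv \<sigma> j) = j" using permutes_inverses(1)[OF p] by simp
    ultimately show "j \<in> \<sigma> ` {l\<in>I. P (\<sigma> l)}"
      using j by (intro image_eqI[where x="inv \<sigma> j"]) simp_all
  qed
  moreover have "inj_on \<sigma> {l\<in>I. P (\<sigma> l)}"
    using permutes_inj[OF p] inj_on_subset subset_UNIV by blast
  ultimately show ?thesis
    using card_image[of \<sigma> "{l\<in>I. P (\<sigma> l)}"] by simp
qed

lemma phi_swap:
  assumes k: "k \<in> {0..B}"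
  shows "phi B x 0 (y \<circ> Transposition.transpose 0 k) = phi B x k y"
proof -
  let ?s = "Transposition.transpose 0 k"
  have p: "?s permutes {0..B}" using k by (intro permutes_swap_id) auto
  have s0: "?s 0 = k" by simp
  have "card {l\<in>{0..B}. (y \<circ> ?s) l > (y \<circ> ?s) 0} = card {l\<in>{0..B}. y l > y k}"
    using card_perm_filter[OF p, of "\<lambda>v. y v > y k"] by (simp add: s0)
  moreover have "card {l\<in>{0..B}. (y \<circ> ?s) l = (y \<circ> ?s) 0} = card {l\<in>{0..B}. y l = y k}"
    using card_perm_filter[OF p, of "\<lambda>v. y v = y k"] by (simp add: s0)
  ultimately show ?thesis unfolding phi_def by simp
qed

lemma phi_measurable:
  assumes Q: "sets Q = sets borel"
  shows "phi B x k \<in> borel_measurable (PiM {0..B} (\<lambda>_. Q))"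
proof -
  have c: "(\<lambda>y. y l) \<in> borel_measurable (PiM {0..B} (\<lambda>_. Q))" if "l \<in> {0..B}" for l
    using measurable_component_singleton[OF that, of "\<lambda>_. Q"]
    by (simp add: measurable_cong_sets[OF refl Q])
  have ck: "(\<lambda>y. y k) \<in> borel_measurable (PiM {0..B} (\<lambda>_. Q))"
  proof (cases "k \<in> {0..B}")
    case True thus ?thesis using c by simp
  next
    case False
    have "(\<lambda>y. y k) \<in> borel_measurable (PiM {0..B} (\<lambda>_. Q)) \<longleftrightarrow> (\<lambda>y. undefined::real) \<in> borel_measurable (PiM {0..B} (\<lambda>_. Q))"
      using False by (intro measurable_cong) (auto simp: space_PiM PiE_def extensional_def)
    thus ?thesis by simp
  qed
  have p1: "{y \<in> space (PiM {0..B} (\<lambda>_. Q)). y l > y k} \<in> sets (PiM {0..B} (\<lambda>_. Q))"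
    if "l \<in> {0..B}" for l
    by (rule borel_measurable_less[OF ck c[OF that]])
  have p2: "{y \<in> space (PiM {0..B} (\<lambda>_. Q)). y l = y k} \<in> sets (PiM {0..B} (\<lambda>_. Q))"
    if "l \<in> {0..B}" for l
    by (rule borel_measurable_eq[OF c[OF that] ck])
  have m1: "(\<lambda>y. real (card {l\<in>{0..B}. y l > y k})) \<in> borel_measurable (PiM {0..B} (\<lambda>_. Q))"
    by (rule card_filter_real_measurable) (simp_all add: p1)
  have m2: "(\<lambda>y. real (card {l\<in>{0..B}. y l = y k})) \<in> borel_measurable (PiM {0..B} (\<lambda>_. Q))"
    by (rule card_filter_real_measurable) (simp_all add: p2)
  show ?thesis unfolding phi_def clamp01_def
    using m1 m2 by measurable
qed

lemma phi_bounds: "0 \<le> phi B x k y" "phi B x k y \<le> 1"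
  by (auto simp: phi_def clamp01_def)

lemma clamp_scale:
  fixes c x :: real assumes c: "c > 0"
  shows "max 0 (min (c * x) c) = c * clamp01 x"
proof (cases "x \<le> 0")
  case True
  hence "c * x \<le> 0" using c by (simp add: mult_nonneg_nonpos)
  thus ?thesis using True by (simp add: clamp01_def)
next
  case False
  show ?thesis
  proof (cases "x \<le> 1")
    case True
    hence "c * x \<le> c" using c by (simp add: mult_left_le)
    moreover have "c * x \<ge> 0" using False c by simp
    ultimately show ?thesis using True False by (simp add: clamp01_def)
  next
    case False
    hence "c * x \<ge> c" using c by (simp add: mult_le_cancel_left1)
    thus ?thesis using False c by (simp add: clamp01_def)
  qed
qed

lemma phi_exch:
  assumes Qp: "prob_space Q" and Q: "sets Q = sets borel"
  shows "integral\<^sup>L (PiM {0..B} (\<lambda>_. Q)) (phi B x 0) = clamp01 x"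
proof -
  let ?M = "PiM {0..B} (\<lambda>_. Q)"
  interpret M: prob_space ?M by (intro prob_space_PiM Qp)
  have int: "integrable ?M (phi B x k)" for k
    by (rule M.integrable_const_bound[where B=1]) (auto simp: phi_bounds phi_measurable[OF Q])
  have eqk: "integral\<^sup>L ?M (phi B x 0) = integral\<^sup>L ?M (phi B x k)" if k: "k \<in> {0..B}" for k
proof -
    let ?s = "Transposition.transpose 0 k"
    have p: "?s permutes {0..B}" using k by (intro permutes_swap_id) auto
    have "integral\<^sup>L ?M (phi B x 0) = integral\<^sup>L (distr ?M ?M (\<lambda>y. y \<circ> ?s)) (phi B x 0)"
      using PiM_perm_inv[OF Qp p] by simp
    also have "\<dots> = integral\<^sup>L ?M (\<lambda>y. phi B x 0 (y \<circ> ?s))"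
      by (rule integral_distr[OF comp_perm_measurable[OF p] phi_measurable[OF Q]])
    also have "\<dots> = integral\<^sup>L ?M (phi B x k)"
      using phi_swap[OF k] by simp
    finally show ?thesis .
  qed
  have "(real B + 1) * integral\<^sup>L ?M (phi B x 0) = (\<Sum>k\<in>{0..B}. integral\<^sup>L ?M (phi B x k))"
proof -
    have "(\<Sum>k\<in>{0..B}. integral\<^sup>L ?M (phi B x k)) = (\<Sum>k\<in>{0..B}. integral\<^sup>L ?M (phi B x 0))"
      using eqk by (intro sum.cong) auto
    thus ?thesis by simp
  qed
  also have "\<dots> = integral\<^sup>L ?M (\<lambda>y. \<Sum>k\<in>{0..B}. phi B x k y)"
    by (subst Bochner_Integration.integral_sum) (auto simp: int)
  also have "\<dots> = integral\<^sup>L ?M (\<lambda>y. max 0 (min ((real B + 1) * x) (real B + 1)))"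
  proof (rule Bochner_Integration.integral_cong[OF refl])
    fix y
    show "(\<Sum>k\<in>{0..B}. phi B x k y) = max 0 (min ((real B + 1) * x) (real B + 1))"
      unfolding phi_def using clamp_sum_identity[of "{0..B}" "(real B + 1) * x" y] by simp
  qed
  also have "\<dots> = max 0 (min ((real B + 1) * x) (real B + 1))" by (simp add: M.prob_space)
  also have "\<dots> = (real B + 1) * clamp01 x"
    by (rule clamp_scale) simp
  finally show ?thesis by simp
qed

definition pvg :: "nat \<Rightarrow> real \<Rightarrow> (nat \<Rightarrow> real) \<Rightarrow> real \<Rightarrow> real" where
  "pvg B t z u = (real (card {b\<in>{1..B}. z b > t}) + u * (1 + real (card {b\<in>{1..B}. z b = t}))) / (real B + 1)"

lemma pvg_section:
  "{u. pvg B t z u \<le> x} = {..((real B + 1) * x - real (card {b\<in>{1..B}. z b > t})) / (1 + real (card {b\<in>{1..B}. z b = t}))}"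
proof -
  let ?K = "real (card {b\<in>{1..B}. z b > t})" and ?E = "1 + real (card {b\<in>{1..B}. z b = t})"
  have N: "real B + 1 > 0" and E: "?E > 0" by auto
  have "pvg B t z u \<le> x \<longleftrightarrow> u \<le> ((real B + 1) * x - ?K) / ?E" for u
proof -
    have "pvg B t z u \<le> x \<longleftrightarrow> ?K + u * ?E \<le> x * (real B + 1)"
      unfolding pvg_def using N by (simp add: pos_divide_le_eq)
    also have "\<dots> \<longleftrightarrow> u * ?E \<le> (real B + 1) * x - ?K" by (simp add: algebra_simps)
    also have "\<dots> \<longleftrightarrow> u \<le> ((real B + 1) * x - ?K) / ?E" using E by (simp add: pos_le_divide_eq)
    finally show ?thesis .
  qed
  thus ?thesis by auto
qed

lemma phi_upd:
  "phi B x 0 (z(0 := t)) = clamp01 (((real B + 1) * x - real (card {b\<in>{1..B}. z b > t})) / (1 + real (card {b\<in>{1..B}. z b = t})))"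
proof -
  have "{l\<in>{0..B}. (z(0 := t)) l > (z(0 := t)) 0} = {b\<in>{1..B}. z b > t}" by auto
  moreover have "{l\<in>{0..B}. (z(0 := t)) l = (z(0 := t)) 0} = insert 0 {b\<in>{1..B}. z b = t}" by auto
  moreover have "card (insert 0 {b\<in>{1..B}. z b = t}) = Suc (card {b\<in>{1..B}. z b = t})" by simp
  ultimately show ?thesis unfolding phi_def by simp
qed

lemma pvg_meas:
  assumes Q: "sets Q = sets borel"
  shows "(\<lambda>(t, z, u). pvg B t z u) \<in> borel_measurable (Q \<Otimes>\<^sub>M (PiM {1..B} (\<lambda>_. Q) \<Otimes>\<^sub>M uniform_measure lborel {0..1}))"
proof -
  let ?U = "uniform_measure lborel {0..1::real}"
  let ?PQ = "PiM {1..B} (\<lambda>_. Q)"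
  let ?M3 = "Q \<Otimes>\<^sub>M (?PQ \<Otimes>\<^sub>M ?U)"
  let ?f = "\<lambda>(t, z, u). pvg B t z u"
  have mt: "(\<lambda>\<omega>. fst \<omega>) \<in> borel_measurable ?M3"
proof -
    have "fst \<in> measurable ?M3 Q" by (rule measurable_fst)
    thus ?thesis by (simp add: measurable_cong_sets[OF refl Q])
  qed
  have mu: "(\<lambda>\<omega>. snd (snd \<omega>)) \<in> borel_measurable ?M3"
proof -
    have "(\<lambda>\<omega>. snd (snd \<omega>)) \<in> measurable ?M3 ?U"
      by (rule measurable_compose[OF measurable_snd measurable_snd])
    thus ?thesis by simp
  qed
  have mz: "(\<lambda>\<omega>. fst (snd \<omega>) b) \<in> borel_measurable ?M3" if "b \<in> {1..B}" for b
proof -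
    have "(\<lambda>\<omega>. fst (snd \<omega>)) \<in> measurable ?M3 ?PQ"
      by (rule measurable_compose[OF measurable_snd measurable_fst])
    from measurable_compose[OF this measurable_component_singleton[OF that]]
    show ?thesis by (simp add: measurable_cong_sets[OF refl Q])
  qed
  have K: "(\<lambda>\<omega>. real (card {b\<in>{1..B}. fst (snd \<omega>) b > fst \<omega>})) \<in> borel_measurable ?M3"
  proof (rule card_filter_real_measurable)
    fix b assume "b \<in> {1..B}"
    show "{\<omega> \<in> space ?M3. fst (snd \<omega>) b > fst \<omega>} \<in> sets ?M3"
      by (rule borel_measurable_less[OF mt mz[OF \<open>b \<in> {1..B}\<close>]])
  qed simp
  have E: "(\<lambda>\<omega>. real (card {b\<in>{1..B}. fst (snd \<omega>) b = fst \<omega>})) \<in> borel_measurable ?M3"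
  proof (rule card_filter_real_measurable)
    fix b assume "b \<in> {1..B}"
    show "{\<omega> \<in> space ?M3. fst (snd \<omega>) b = fst \<omega>} \<in> sets ?M3"
      by (rule borel_measurable_eq[OF mz[OF \<open>b \<in> {1..B}\<close>] mt])
  qed simp
  have "(\<lambda>\<omega>. pvg B (fst \<omega>) (fst (snd \<omega>)) (snd (snd \<omega>))) \<in> borel_measurable ?M3"
    unfolding pvg_def using K E mu by measurable
  moreover have "?f = (\<lambda>\<omega>. pvg B (fst \<omega>) (fst (snd \<omega>)) (snd (snd \<omega>)))"
    by (auto simp: fun_eq_iff)
  ultimately show ?thesis by simp
qed

lemma pvg_uniform:
  assumes Qp: "prob_space Q" and Q: "sets Q = sets borel"
  shows "distr (Q \<Otimes>\<^sub>M (PiM {1..B} (\<lambda>_. Q) \<Otimes>\<^sub>M uniform_measure lborel {0..1})) lborel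
           (\<lambda>(t, z, u). pvg B t z u) = uniform_measure lborel {0..1}"
proof -
  let ?U = "uniform_measure lborel {0..1::real}"
  let ?PQ = "PiM {1..B} (\<lambda>_. Q)"
  let ?M3 = "Q \<Otimes>\<^sub>M (?PQ \<Otimes>\<^sub>M ?U)"
  let ?f = "\<lambda>(t, z, u). pvg B t z u"
  interpret Q: prob_space Q by fact
  interpret PQ: prob_space ?PQ by (intro prob_space_PiM Qp)
  interpret U: prob_space ?U by (rule unif_prob)
  interpret PQU: prob_space "?PQ \<Otimes>\<^sub>M ?U" by (intro prob_space_pair PQ.prob_space_axioms U.prob_space_axioms)
  interpret M3: prob_space ?M3 by (intro prob_space_pair Qp PQU.prob_space_axioms)
  have spQ: "space Q = UNIV" using sets_eq_imp_space_eq[OF Q] by simp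
  have spU: "space ?U = UNIV" by simp
  have fmeas: "?f \<in> borel_measurable ?M3" by (rule pvg_meas[OF Q])
  have updmeas: "(\<lambda>p. (snd p)(0 := fst p)) \<in> measurable (Q \<Otimes>\<^sub>M ?PQ) (PiM {0..B} (\<lambda>_. Q))"
proof -
    have a: "(\<lambda>(x, X). X(0 := x)) \<in> measurable (Q \<Otimes>\<^sub>M ?PQ) (PiM (insert 0 {1..B}) (\<lambda>_. Q))"
      by (rule fun_upd_PiM_measurable)
    have b: "insert 0 {1..B} = {0..B}" by auto
    have c: "(\<lambda>(x, X). X(0 := x)) = (\<lambda>p. (snd p)(0 := fst p))" by (auto simp: fun_eq_iff)
    show ?thesis using a unfolding b c .
  qed
  have distrQ: "distr (Q \<Otimes>\<^sub>M ?PQ) (PiM {0..B} (\<lambda>_. Q)) (\<lambda>p. (snd p)(0 := fst p)) = PiM {0..B} (\<lambda>_. Q)"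
proof -
    have a: "distr (Q \<Otimes>\<^sub>M ?PQ) (PiM (insert 0 {1..B}) (\<lambda>_. Q)) (\<lambda>(x, X). X(0 := x)) = PiM (insert 0 {1..B}) (\<lambda>_. Q)"
      by (rule distr_pair_PiM_eq_PiM) (simp_all add: Qp)
    have b: "insert 0 {1..B} = {0..B}" by auto
    have c: "(\<lambda>(x, X). X(0 := x)) = (\<lambda>p. (snd p)(0 := fst p))" by (auto simp: fun_eq_iff)
    show ?thesis using a unfolding b c .
  qed
  have cdf_eq: "measure (distr ?M3 lborel ?f) {..x} = clamp01 x" for x
proof -
    let ?S = "?f -` {..x} \<inter> space ?M3"
    have S: "?S \<in> sets ?M3" using fmeas by (rule measurable_sets) simp
    have fmeas': "?f \<in> measurable ?M3 lborel" using fmeas by simp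
    have "emeasure (distr ?M3 lborel ?f) {..x} = emeasure ?M3 ?S"
      by (rule emeasure_distr[OF fmeas']) simp
    also have "\<dots> = (\<integral>\<^sup>+t. emeasure (?PQ \<Otimes>\<^sub>M ?U) (Pair t -` ?S) \<partial>Q)"
      by (rule PQU.emeasure_pair_measure_alt[OF S])
    also have "\<dots> = (\<integral>\<^sup>+t. (\<integral>\<^sup>+z. ennreal (phi B x 0 (z(0 := t))) \<partial>?PQ) \<partial>Q)"
    proof (rule nn_integral_cong)
      fix t
      have St: "Pair t -` ?S \<in> sets (?PQ \<Otimes>\<^sub>M ?U)" using S by (rule sets_Pair1)
      have "emeasure (?PQ \<Otimes>\<^sub>M ?U) (Pair t -` ?S) = (\<integral>\<^sup>+z. emeasure ?U (Pair z -` (Pair t -` ?S)) \<partial>?PQ)"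
        by (rule U.emeasure_pair_measure_alt[OF St])
      also have "\<dots> = (\<integral>\<^sup>+z. ennreal (phi B x 0 (z(0 := t))) \<partial>?PQ)"
      proof (rule nn_integral_cong)
        fix z assume z: "z \<in> space ?PQ"
        have "Pair z -` (Pair t -` ?S) = {u. pvg B t z u \<le> x}"
          using z by (auto simp: space_pair_measure spQ)
        also have "\<dots> = {..((real B + 1) * x - real (card {b\<in>{1..B}. z b > t})) / (1 + real (card {b\<in>{1..B}. z b = t}))}"
          by (rule pvg_section)
        finally show "emeasure ?U (Pair z -` (Pair t -` ?S)) = ennreal (phi B x 0 (z(0 := t)))"
          by (simp add: unif_Iic phi_upd)
      qed
      finally show "emeasure (?PQ \<Otimes>\<^sub>M ?U) (Pair t -` ?S) = (\<integral>\<^sup>+z. ennreal (phi B x 0 (z(0 := t))) \<partial>?PQ)" .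
    qed
    also have "\<dots> = (\<integral>\<^sup>+p. ennreal (phi B x 0 ((snd p)(0 := fst p))) \<partial>(Q \<Otimes>\<^sub>M ?PQ))"
    proof -
      have m: "(\<lambda>p. ennreal (phi B x 0 ((snd p)(0 := fst p)))) \<in> borel_measurable (Q \<Otimes>\<^sub>M ?PQ)"
        using measurable_compose[OF measurable_compose[OF updmeas phi_measurable[OF Q]] measurable_ennreal] .
      show ?thesis using PQ.nn_integral_fst[OF m] by simp
    qed
    also have "\<dots> = (\<integral>\<^sup>+y. ennreal (phi B x 0 y) \<partial>(distr (Q \<Otimes>\<^sub>M ?PQ) (PiM {0..B} (\<lambda>_. Q)) (\<lambda>p. (snd p)(0 := fst p))))"
      by (rule nn_integral_distr[symmetric, OF updmeas])
        (simp add: measurable_compose[OF phi_measurable[OF Q] measurable_ennreal])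
    also have "\<dots> = (\<integral>\<^sup>+y. ennreal (phi B x 0 y) \<partial>PiM {0..B} (\<lambda>_. Q))"
      by (simp only: distrQ)
    also have "\<dots> = ennreal (integral\<^sup>L (PiM {0..B} (\<lambda>_. Q)) (phi B x 0))"
    proof (rule nn_integral_eq_integral)
      interpret M: prob_space "PiM {0..B} (\<lambda>_. Q)" by (intro prob_space_PiM Qp)
      show "integrable (PiM {0..B} (\<lambda>_. Q)) (phi B x 0)"
        by (rule M.integrable_const_bound[where B=1]) (auto simp: phi_bounds phi_measurable[OF Q])
    qed (simp add: phi_bounds)
    also have "\<dots> = ennreal (clamp01 x)" by (simp add: phi_exch[OF Qp Q])
    finally have e: "emeasure (distr ?M3 lborel ?f) {..x} = ennreal (clamp01 x)" .
    have "clamp01 x \<ge> 0" by (simp add: clamp01_def)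
    thus ?thesis unfolding measure_def e by simp
  qed
  show ?thesis
  proof (rule cdf_unique)
    show "real_distribution (distr ?M3 lborel ?f)"
      unfolding real_distribution_def real_distribution_axioms_def
    proof
      show "prob_space (distr ?M3 lborel ?f)"
        by (rule M3.prob_space_distr) (use fmeas in simp)
    qed simp
    show "real_distribution ?U"
      unfolding real_distribution_def real_distribution_axioms_def
      using U.prob_space_axioms by simp
    show "cdf (distr ?M3 lborel ?f) = cdf ?U"
      unfolding cdf_def by (rule ext) (rule trans[OF cdf_eq unif_cdf[symmetric]])
  qed
qed

definition scr :: "('z \<Rightarrow> (nat \<Rightarrow> 'z) \<Rightarrow> real) \<Rightarrow> real \<Rightarrow> (nat \<Rightarrow> 'z) \<times> (nat \<Rightarrow> real) \<Rightarrow> nat \<Rightarrow> real" where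
  "scr S \<epsilon> \<omega> = scores S \<epsilon> (fst \<omega>) (snd \<omega>)"

definition rk :: "nat \<Rightarrow> ('z \<Rightarrow> (nat \<Rightarrow> 'z) \<Rightarrow> real) \<Rightarrow> real \<Rightarrow> (nat \<Rightarrow> 'z) \<times> (nat \<Rightarrow> real) \<Rightarrow> nat \<Rightarrow> nat" where
  "rk n S \<epsilon> \<omega> = (\<lambda>i. if i \<in> {1..n} then rank n (scr S \<epsilon> \<omega>) i else i)"

lemma vec_list_eq_iff: "vec_list n f = vec_list n g \<longleftrightarrow> (\<forall>i\<in>{1..n}. f i = g i)"
  unfolding vec_list_def by auto

lemma vec_list_rk: "vec_list n (rank n (scr S \<epsilon> \<omega>)) = vec_list n (rk n S \<epsilon> \<omega>)"
  unfolding vec_list_eq_iff rk_def by simp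

lemma fix_out_eq:
  assumes "\<forall>i\<in>{1..n}. f i = g i" "\<And>i. i \<notin> {1..n} \<Longrightarrow> f i = i" "\<And>i. i \<notin> {1..n} \<Longrightarrow> g i = i"
  shows "f = g"
proof
  fix i show "f i = g i" using assms by (cases "i \<in> {1..n}") auto
qed

locale rkset =
  fixes n :: nat and P1 :: "'z measure" and S :: "'z \<Rightarrow> (nat \<Rightarrow> 'z) \<Rightarrow> real" and \<epsilon> :: real
  assumes P1: "prob_space P1" and ST: "symmetric_transformation n P1 S" and eps: "\<epsilon> > 0"
begin

lemma scr_measurable:
  assumes i: "i \<in> {1..n}"
  shows "(\<lambda>\<omega>. scr S \<epsilon> \<omega> i) \<in> borel_measurable (data_noise n P1)"
proof -
  let ?A = "PiM {1..n} (\<lambda>_. P1)" and ?B = "PiM {1..n} (\<lambda>_. std_normal)"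
  have Sm: "(\<lambda>(z, D). S z D) \<in> borel_measurable (P1 \<Otimes>\<^sub>M ?A)"
    using ST unfolding symmetric_transformation_def by blast
  have f1: "(\<lambda>\<omega>. fst \<omega> i) \<in> measurable (?A \<Otimes>\<^sub>M ?B) P1"
    by (rule measurable_compose[OF measurable_fst measurable_component_singleton[OF i]])
  have f2: "(\<lambda>\<omega>. fst \<omega>) \<in> measurable (?A \<Otimes>\<^sub>M ?B) ?A"
    by (rule measurable_fst)
  have pr: "(\<lambda>\<omega>. (fst \<omega> i, fst \<omega>)) \<in> measurable (?A \<Otimes>\<^sub>M ?B) (P1 \<Otimes>\<^sub>M ?A)"
    by (rule measurable_Pair[OF f1 f2])
  have a: "(\<lambda>\<omega>. S (fst \<omega> i) (fst \<omega>)) \<in> borel_measurable (?A \<Otimes>\<^sub>M ?B)"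
    using measurable_compose[OF pr Sm] by simp
  have b0: "(\<lambda>\<omega>. snd \<omega> i) \<in> measurable (?A \<Otimes>\<^sub>M ?B) std_normal"
    by (rule measurable_compose[OF measurable_snd measurable_component_singleton[OF i]])
  have b: "(\<lambda>\<omega>. snd \<omega> i) \<in> borel_measurable (?A \<Otimes>\<^sub>M ?B)"
    using b0 by (simp add: measurable_cong_sets[OF refl std_normal_sets])
  have "(\<lambda>\<omega>. S (fst \<omega> i) (fst \<omega>) + \<epsilon> * snd \<omega> i) \<in> borel_measurable (?A \<Otimes>\<^sub>M ?B)"
    using a b by measurable
  thus ?thesis unfolding scr_def scores_def data_noise_def by simp
qed

lemma rank_measurable:
  assumes i: "i \<in> {1..n}"
  shows "(\<lambda>\<omega>. real (rank n (scr S \<epsilon> \<omega>) i)) \<in> borel_measurable (data_noise n P1)"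
  unfolding rank_def
proof (rule card_filter_real_measurable)
  fix j assume j: "j \<in> {1..n}"
  show "{\<omega> \<in> space (data_noise n P1). scr S \<epsilon> \<omega> j \<le> scr S \<epsilon> \<omega> i} \<in> sets (data_noise n P1)"
    by (rule borel_measurable_le[OF scr_measurable[OF j] scr_measurable[OF i]])
qed simp

lemma L_measurable:
  "(\<lambda>\<omega>. vec_list n (rank n (scr S \<epsilon> \<omega>))) \<in> measurable (data_noise n P1) (count_space UNIV)"
proof (subst measurable_count_space_eq2_countable, intro conjI ballI)
  fix xs :: "nat list"
  let ?M = "data_noise n P1"
  show "(\<lambda>\<omega>. vec_list n (rank n (scr S \<epsilon> \<omega>))) -` {xs} \<inter> space ?M \<in> sets ?M"
  proof (cases "length xs = n")
    case True
    have "(\<lambda>\<omega>. vec_list n (rank n (scr S \<epsilon> \<omega>))) -` {xs} \<inter> space ?M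
        = {\<omega> \<in> space ?M. \<forall>i\<in>{1..n}. real (rank n (scr S \<epsilon> \<omega>) i) = real (xs ! (i - 1))}"
    proof -
      have "vec_list n (rank n (scr S \<epsilon> \<omega>)) = xs \<longleftrightarrow> (\<forall>i\<in>{1..n}. rank n (scr S \<epsilon> \<omega>) i = xs ! (i - 1))" for \<omega>
      proof -
        have "vec_list n (rank n (scr S \<epsilon> \<omega>)) = xs \<longleftrightarrow> (\<forall>k<n. rank n (scr S \<epsilon> \<omega>) (k + 1) = xs ! k)"
          unfolding vec_list_def using True by (auto simp del: upt_Suc simp: list_eq_iff_nth_eq)
        also have "\<dots> \<longleftrightarrow> (\<forall>i\<in>{1..n}. rank n (scr S \<epsilon> \<omega>) i = xs ! (i - 1))"
        proof
          assume h: "\<forall>k<n. rank n (scr S \<epsilon> \<omega>) (k + 1) = xs ! k"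
          show "\<forall>i\<in>{1..n}. rank n (scr S \<epsilon> \<omega>) i = xs ! (i - 1)"
          proof
            fix i assume "i \<in> {1..n}"
            hence "i - 1 < n" "i - 1 + 1 = i" by auto
            thus "rank n (scr S \<epsilon> \<omega>) i = xs ! (i - 1)" using h[rule_format, of "i - 1"] by simp
          qed
        next
          assume h: "\<forall>i\<in>{1..n}. rank n (scr S \<epsilon> \<omega>) i = xs ! (i - 1)"
          show "\<forall>k<n. rank n (scr S \<epsilon> \<omega>) (k + 1) = xs ! k"
          proof (intro allI impI)
            fix k assume "k < n"
            thus "rank n (scr S \<epsilon> \<omega>) (k + 1) = xs ! k" using h[rule_format, of "k + 1"] by simp
          qed
        qed
        finally show ?thesis .
      qed
      thus ?thesis by auto
    qed
    also have "\<dots> \<in> sets ?M"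
    proof (rule sets.sets_Collect_finite_All)
      fix i assume i: "i \<in> {1..n}"
      show "{\<omega> \<in> space ?M. real (rank n (scr S \<epsilon> \<omega>) i) = real (xs ! (i - 1))} \<in> sets ?M"
        by (rule borel_measurable_eq[OF rank_measurable[OF i] borel_measurable_const])
    qed simp
    finally show ?thesis .
  next
    case False
    hence "(\<lambda>\<omega>. vec_list n (rank n (scr S \<epsilon> \<omega>))) -` {xs} \<inter> space ?M = {}"
      by (auto simp: vec_list_def)
    thus ?thesis by simp
  qed
qed simp

end

context rkset
begin

lemma ties_AE: "AE \<omega> in data_noise n P1. inj_on (scr S \<epsilon> \<omega>) {1..n}"
proof -
  let ?A = "PiM {1..n} (\<lambda>_. P1)" and ?B = "PiM {1..n} (\<lambda>_. std_normal)" and ?M = "data_noise n P1"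
  interpret B: prob_space ?B by (intro prob_space_PiM std_normal_prob)
  have null: "AE \<omega> in ?M. scr S \<epsilon> \<omega> i \<noteq> scr S \<epsilon> \<omega> j" if ij: "i \<in> {1..n}" "j \<in> {1..n}" "i \<noteq> j" for i j
proof -
    let ?Z = "{\<omega> \<in> space ?M. scr S \<epsilon> \<omega> i = scr S \<epsilon> \<omega> j}"
    have Z: "?Z \<in> sets ?M" by (rule borel_measurable_eq[OF scr_measurable[OF ij(1)] scr_measurable[OF ij(2)]])
    have Z': "?Z \<in> sets (?A \<Otimes>\<^sub>M ?B)" using Z by (simp add: data_noise_def)
    have ci: "(\<lambda>x. x k) \<in> borel_measurable ?B" if "k \<in> {1..n}" for k
      using measurable_component_singleton[OF that, of "\<lambda>_. std_normal"]
      by (simp add: measurable_cong_sets[OF refl std_normal_sets])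
    have "emeasure ?M ?Z = (\<integral>\<^sup>+D. emeasure ?B (Pair D -` ?Z) \<partial>?A)"
      unfolding data_noise_def by (rule B.emeasure_pair_measure_alt[OF Z'[unfolded data_noise_def]])
    also have "\<dots> = (\<integral>\<^sup>+D. 0 \<partial>?A)"
    proof (rule nn_integral_cong)
      fix D
      let ?a = "(S (D j) D - S (D i) D) / \<epsilon>"
      have sub: "Pair D -` ?Z \<subseteq> {e \<in> space ?B. e i = ?a + e j}"
      proof
        fix e assume "e \<in> Pair D -` ?Z"
        hence e: "e \<in> space ?B" "S (D i) D + \<epsilon> * e i = S (D j) D + \<epsilon> * e j"
          by (auto simp: scr_def scores_def data_noise_def space_pair_measure)
        have "\<epsilon> * e i = (S (D j) D - S (D i) D) + \<epsilon> * e j" using e(2) by linarith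
        hence "e i = ?a + e j" using eps by (simp add: field_simps)
        thus "e \<in> {e \<in> space ?B. e i = ?a + e j}" using e(1) by simp
      qed
      have meas: "{e \<in> space ?B. e i = ?a + e j} \<in> sets ?B"
        using ci[OF ij(1)] ci[OF ij(2)] by measurable
      have "emeasure ?B (Pair D -` ?Z) \<le> emeasure ?B {e \<in> space ?B. e i = ?a + e j}"
        by (rule emeasure_mono[OF sub meas])
      also have "\<dots> = 0" by (rule tie_null_normal) (use ij in auto)
      finally show "emeasure ?B (Pair D -` ?Z) = 0" by simp
    qed
    finally have "emeasure ?M ?Z = 0" by simp
    hence "?Z \<in> null_sets ?M" using Z by (simp add: null_sets_def)
    thus ?thesis by (rule AE_I') auto
  qed
  have "AE \<omega> in ?M. \<forall>i\<in>{1..n}. \<forall>j\<in>{1..n}. i \<noteq> j \<longrightarrow> scr S \<epsilon> \<omega> i \<noteq> scr S \<epsilon> \<omega> j"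
    using null by (simp add: AE_finite_all)
  thus ?thesis by eventually_elim (auto simp: inj_on_def)
qed

lemma rk_in_perms_AE: "AE \<omega> in data_noise n P1. rk n S \<epsilon> \<omega> \<in> perms n"
  using ties_AE
proof eventually_elim
  case (elim \<omega>)
  show ?case unfolding rk_def perms_def mem_Collect_eq by (rule rank_perm[OF elim])
qed

definition T :: "(nat \<Rightarrow> nat) \<Rightarrow> (nat \<Rightarrow> 'z) \<times> (nat \<Rightarrow> real) \<Rightarrow> (nat \<Rightarrow> 'z) \<times> (nat \<Rightarrow> real)" where
  "T \<pi> = (\<lambda>(D, e). (D \<circ> \<pi>, e \<circ> \<pi>))"

lemma T_measurable:
  assumes p: "\<pi> permutes {1..n}"
  shows "T \<pi> \<in> measurable (data_noise n P1) (data_noise n P1)"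
proof -
  let ?A = "PiM {1..n} (\<lambda>_. P1)" and ?B = "PiM {1..n} (\<lambda>_. std_normal)"
  have "(\<lambda>\<omega>. (fst \<omega> \<circ> \<pi>, snd \<omega> \<circ> \<pi>)) \<in> measurable (?A \<Otimes>\<^sub>M ?B) (?A \<Otimes>\<^sub>M ?B)"
    by (rule measurable_Pair[OF measurable_compose[OF measurable_fst comp_perm_measurable[OF p]]
                                measurable_compose[OF measurable_snd comp_perm_measurable[OF p]]])
  moreover have "T \<pi> = (\<lambda>\<omega>. (fst \<omega> \<circ> \<pi>, snd \<omega> \<circ> \<pi>))" by (auto simp: T_def fun_eq_iff)
  ultimately show ?thesis by (simp add: data_noise_def)
qed

lemma T_distr:
  assumes p: "\<pi> permutes {1..n}"
  shows "distr (data_noise n P1) (data_noise n P1) (T \<pi>) = data_noise n P1"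
  unfolding T_def by (rule data_noise_inv[OF P1 p])

lemma rk_T:
  assumes p: "\<pi> permutes {1..n}" and \<omega>: "\<omega> \<in> space (data_noise n P1)"
  shows "rk n S \<epsilon> (T \<pi> \<omega>) = rk n S \<epsilon> \<omega> \<circ> \<pi>"
proof -
  obtain D e where De: "\<omega> = (D, e)" by (cases \<omega>)
  have D: "D \<in> space (PiM {1..n} (\<lambda>_. P1))" using \<omega> De by (simp add: data_noise_def space_pair_measure)
  have sym: "S z (D \<circ> \<pi>) = S z D" if "z \<in> space P1" for z
    using ST D p that unfolding symmetric_transformation_def by blast
  have pin: "\<pi> i \<in> {1..n}" if "i \<in> {1..n}" for i using permutes_in_image[OF p] that by blast
  have sc: "scr S \<epsilon> (T \<pi> \<omega>) i = (scr S \<epsilon> \<omega> \<circ> \<pi>) i" if i: "i \<in> {1..n}" for i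
proof -
    have "D (\<pi> i) \<in> space P1" using D pin[OF i] by (auto simp: space_PiM PiE_def Pi_def)
    thus ?thesis using sym by (simp add: T_def De scr_def scores_def)
  qed
  have rkeq: "rank n (scr S \<epsilon> (T \<pi> \<omega>)) i = rank n (scr S \<epsilon> \<omega>) (\<pi> i)" if i: "i \<in> {1..n}" for i
proof -
    have "rank n (scr S \<epsilon> (T \<pi> \<omega>)) i = rank n (scr S \<epsilon> \<omega> \<circ> \<pi>) i"
      unfolding rank_def using sc i by (intro arg_cong[where f=card]) auto
    also have "\<dots> = rank n (scr S \<epsilon> \<omega>) (\<pi> i)" by (rule rank_comp[OF p i])
    finally show ?thesis .
  qed
  show ?thesis
  proof
    fix i show "rk n S \<epsilon> (T \<pi> \<omega>) i = (rk n S \<epsilon> \<omega> \<circ> \<pi>) i"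
    proof (cases "i \<in> {1..n}")
      case True thus ?thesis using rkeq pin by (simp add: rk_def)
    next
      case False
      hence pi: "\<pi> i = i" using p by (simp add: permutes_not_in)
      have a: "rk n S \<epsilon> (T \<pi> \<omega>) i = i" unfolding rk_def by (rule if_not_P[OF False])
      have b: "rk n S \<epsilon> \<omega> i = i" unfolding rk_def by (rule if_not_P[OF False])
      show ?thesis using a b pi by simp
    qed
  qed
qed

end

context rkset
begin

definition E :: "(nat \<Rightarrow> nat) \<Rightarrow> ((nat \<Rightarrow> 'z) \<times> (nat \<Rightarrow> real)) set" where
  "E \<sigma> = {\<omega> \<in> space (data_noise n P1). rk n S \<epsilon> \<omega> = \<sigma>}"

lemma rk_fix: "i \<notin> {1..n} \<Longrightarrow> rk n S \<epsilon> \<omega> i = i"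
  unfolding rk_def by (rule if_not_P)

lemma E_sets:
  assumes \<sigma>: "\<sigma> \<in> perms n"
  shows "E \<sigma> \<in> sets (data_noise n P1)"
proof -
  let ?M = "data_noise n P1"
  have p: "\<sigma> permutes {1..n}" using \<sigma> by (simp add: perms_def)
  have "E \<sigma> = (\<lambda>\<omega>. vec_list n (rank n (scr S \<epsilon> \<omega>))) -` {vec_list n \<sigma>} \<inter> space ?M"
proof -
    have "vec_list n (rank n (scr S \<epsilon> \<omega>)) = vec_list n \<sigma> \<longleftrightarrow> rk n S \<epsilon> \<omega> = \<sigma>" for \<omega>
    proof
      assume "vec_list n (rank n (scr S \<epsilon> \<omega>)) = vec_list n \<sigma>"
      hence "\<forall>i\<in>{1..n}. rk n S \<epsilon> \<omega> i = \<sigma> i" unfolding vec_list_rk vec_list_eq_iff .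
      thus "rk n S \<epsilon> \<omega> = \<sigma>"
        by (rule fix_out_eq) (simp_all add: rk_fix permutes_not_in[OF p])
    next
      assume "rk n S \<epsilon> \<omega> = \<sigma>"
      thus "vec_list n (rank n (scr S \<epsilon> \<omega>)) = vec_list n \<sigma>" by (simp add: vec_list_rk)
    qed
    thus ?thesis by (auto simp: E_def)
  qed
  also have "\<dots> \<in> sets ?M" by (rule measurable_sets[OF L_measurable]) simp
  finally show ?thesis .
qed

lemma E_prob:
  assumes \<sigma>: "\<sigma> \<in> perms n"
  shows "measure (data_noise n P1) (E \<sigma>) = measure (data_noise n P1) (E id)"
proof -
  let ?M = "data_noise n P1"
  have p0: "\<sigma> permutes {1..n}" using \<sigma> by (simp add: perms_def)
  let ?p = "inv \<sigma>"
  have p: "?p permutes {1..n}" by (rule permutes_inv[OF p0])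
  have ip: "inv ?p = \<sigma>" by (rule permutes_inv_inv[OF p0])
  have idp: "id \<in> perms n" by (simp add: perms_def)
  have pre: "T ?p -` E id \<inter> space ?M = E \<sigma>"
  proof (rule set_eqI)
    fix \<omega>
    show "\<omega> \<in> T ?p -` E id \<inter> space ?M \<longleftrightarrow> \<omega> \<in> E \<sigma>"
    proof (cases "\<omega> \<in> space ?M")
      case True
      have Ts: "T ?p \<omega> \<in> space ?M" using measurable_space[OF T_measurable[OF p] True] .
      have "rk n S \<epsilon> \<omega> \<circ> ?p = id \<longleftrightarrow> rk n S \<epsilon> \<omega> = \<sigma>"
      proof
        assume h: "rk n S \<epsilon> \<omega> \<circ> ?p = id"
        have "rk n S \<epsilon> \<omega> = rk n S \<epsilon> \<omega> \<circ> (?p \<circ> inv ?p)" using permutes_inv_o(1)[OF p] by simp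
        also have "\<dots> = inv ?p" using h by (simp add: o_assoc)
        finally show "rk n S \<epsilon> \<omega> = \<sigma>" using ip by simp
      next
        assume "rk n S \<epsilon> \<omega> = \<sigma>"
        thus "rk n S \<epsilon> \<omega> \<circ> ?p = id" using permutes_inv_o(1)[OF p0] by simp
      qed
      thus ?thesis using True Ts rk_T[OF p True] by (simp add: E_def)
    next
      case False thus ?thesis by (simp add: E_def)
    qed
  qed
  have "measure ?M (E id) = measure (distr ?M ?M (T ?p)) (E id)" using T_distr[OF p] by simp
  also have "\<dots> = measure ?M (T ?p -` E id \<inter> space ?M)"
    by (rule measure_distr[OF T_measurable[OF p] E_sets[OF idp]])
  also have "\<dots> = measure ?M (E \<sigma>)" using pre by simp
  finally show ?thesis by simp
qed

lemma finite_perms: "finite (perms n)"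
  unfolding perms_def by (rule finite_permutations) simp

lemma perms_nonempty: "perms n \<noteq> {}"
  unfolding perms_def using permutes_id by blast

lemma E_disj: "disjoint_family_on E (perms n)"
  unfolding disjoint_family_on_def E_def by auto

lemma E_id_prob: "measure (data_noise n P1) (E id) = 1 / real (card (perms n))"
proof -
  let ?M = "data_noise n P1"
  interpret M: prob_space ?M by (rule data_noise_prob[OF P1])
  have U: "{\<omega> \<in> space ?M. rk n S \<epsilon> \<omega> \<in> perms n} = (\<Union>\<sigma>\<in>perms n. E \<sigma>)"
    by (auto simp: E_def)
  have Us: "(\<Union>\<sigma>\<in>perms n. E \<sigma>) \<in> sets ?M"
    using E_sets finite_perms by (intro sets.finite_UN) auto
  have "measure ?M {\<omega> \<in> space ?M. rk n S \<epsilon> \<omega> \<in> perms n} = 1"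
    using M.prob_Collect_eq_1[of "\<lambda>\<omega>. rk n S \<epsilon> \<omega> \<in> perms n"] Us U rk_in_perms_AE by simp
  hence "1 = measure ?M (\<Union>\<sigma>\<in>perms n. E \<sigma>)" using U by simp
  also have "\<dots> = (\<Sum>\<sigma>\<in>perms n. measure ?M (E \<sigma>))"
    using finite_perms E_sets E_disj by (intro M.finite_measure_finite_Union) auto
  also have "\<dots> = (\<Sum>\<sigma>\<in>perms n. measure ?M (E id))"
    using E_prob by (intro sum.cong) auto
  also have "\<dots> = real (card (perms n)) * measure ?M (E id)" by simp
  finally have "real (card (perms n)) * measure ?M (E id) = 1" by simp
  moreover have "card (perms n) > 0" using finite_perms perms_nonempty by (simp add: card_gt_0_iff)
  ultimately show ?thesis by (simp add: field_simps)
qed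

lemma part1:
  "distr (data_noise n P1) borel (\<lambda>(D, e). test_stat n A S \<epsilon> D e)
     = distr (unif_perm n) borel (\<lambda>\<pi>. A (vec_list n \<pi>))"
proof -
  let ?M = "data_noise n P1"
  let ?f = "\<lambda>(D, e). test_stat n A S \<epsilon> D e"
  let ?g = "\<lambda>\<pi>. A (vec_list n \<pi>)"
  interpret M: prob_space ?M by (rule data_noise_prob[OF P1])
  have feq: "?f = (\<lambda>\<omega>. A (vec_list n (rank n (scr S \<epsilon> \<omega>))))"
    by (auto simp: fun_eq_iff test_stat_def scr_def)
  have Ameas: "A \<in> measurable (count_space UNIV) borel" by simp
  have fmeas: "?f \<in> borel_measurable ?M"
    unfolding feq using measurable_compose[OF L_measurable Ameas] by simp
  have gmeas: "?g \<in> borel_measurable (unif_perm n)" by (simp add: unif_perm_def)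
  have Eid: "measure ?M (E \<tau>) = 1 / real (card (perms n))" if "\<tau> \<in> perms n" for \<tau>
    using E_prob[OF that] E_id_prob by simp
  show ?thesis
  proof (rule measure_eqI)
    show "sets (distr ?M borel ?f) = sets (distr (unif_perm n) borel ?g)" by simp
  next
    fix X assume "X \<in> sets (distr ?M borel ?f)"
    hence X: "X \<in> sets borel" by simp
    define F where "F = {\<tau> \<in> perms n. A (vec_list n \<tau>) \<in> X}"
    have Ffin: "finite F" using finite_perms by (simp add: F_def)
    have Fsub: "F \<subseteq> perms n" by (auto simp: F_def)
    have Rs: "(\<Union>\<tau>\<in>F. E \<tau>) \<in> sets ?M"
      using E_sets Ffin Fsub by (intro sets.finite_UN) auto
    have PS: "?f -` X \<inter> space ?M \<in> sets ?M" by (rule measurable_sets[OF fmeas X])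
    have "emeasure (distr ?M borel ?f) X = emeasure ?M (?f -` X \<inter> space ?M)"
      by (rule emeasure_distr[OF fmeas X])
    also have "\<dots> = emeasure ?M (\<Union>\<tau>\<in>F. E \<tau>)"
    proof (rule emeasure_eq_AE)
      show "AE \<omega> in ?M. (\<omega> \<in> ?f -` X \<inter> space ?M) = (\<omega> \<in> (\<Union>\<tau>\<in>F. E \<tau>))"
        using rk_in_perms_AE
      proof eventually_elim
        case (elim \<omega>)
        have fo: "?f \<omega> = A (vec_list n (rk n S \<epsilon> \<omega>))"
          by (simp add: feq vec_list_rk)
        show ?case
        proof (cases "\<omega> \<in> space ?M")
          case True
          have "\<omega> \<in> (\<Union>\<tau>\<in>F. E \<tau>) \<longleftrightarrow> rk n S \<epsilon> \<omega> \<in> F"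
            using True by (auto simp: E_def)
          also have "\<dots> \<longleftrightarrow> A (vec_list n (rk n S \<epsilon> \<omega>)) \<in> X" using elim by (simp add: F_def)
          finally show ?thesis using True fo by simp
        next
          case False thus ?thesis by (auto simp: E_def)
        qed
      qed
    qed (use PS Rs in auto)
    also have "\<dots> = ennreal (measure ?M (\<Union>\<tau>\<in>F. E \<tau>))" by (rule M.emeasure_eq_measure)
    also have "measure ?M (\<Union>\<tau>\<in>F. E \<tau>) = (\<Sum>\<tau>\<in>F. measure ?M (E \<tau>))"
      using Ffin Fsub E_sets E_disj by (intro M.finite_measure_finite_Union) (auto intro: disjoint_family_on_mono)
    also have "\<dots> = (\<Sum>\<tau>\<in>F. 1 / real (card (perms n)))"
      using Fsub Eid by (intro sum.cong) auto
    also have "\<dots> = real (card F) / real (card (perms n))" by simp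
    also have "real (card F) / real (card (perms n)) = measure (unif_perm n) (?g -` X \<inter> space (unif_perm n))"
    proof -
      have "perms n \<inter> (?g -` X \<inter> space (unif_perm n)) = F" by (auto simp: F_def unif_perm_def)
      thus ?thesis unfolding unif_perm_def
        by (subst measure_pmf_of_set[OF perms_nonempty finite_perms]) simp
    qed
    also have "ennreal \<dots> = emeasure (unif_perm n) (?g -` X \<inter> space (unif_perm n))"
      unfolding unif_perm_def by (rule measure_pmf.emeasure_eq_measure[symmetric])
    also have "\<dots> = emeasure (distr (unif_perm n) borel ?g) X"
      by (rule emeasure_distr[OF gmeas X, symmetric])
    finally show "emeasure (distr ?M borel ?f) X = emeasure (distr (unif_perm n) borel ?g) X" .
  qed
qed

end

context rkset
begin

lemma Tf_measurable: "(\<lambda>(D, e). test_stat n A S \<epsilon> D e) \<in> borel_measurable (data_noise n P1)"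
proof -
  have feq: "(\<lambda>(D, e). test_stat n A S \<epsilon> D e) = (\<lambda>\<omega>. A (vec_list n (rank n (scr S \<epsilon> \<omega>))))"
    by (auto simp: fun_eq_iff test_stat_def scr_def)
  have Ameas: "A \<in> measurable (count_space UNIV) borel" by simp
  show ?thesis unfolding feq using measurable_compose[OF L_measurable Ameas] by simp
qed

lemma part2:
  assumes B: "B \<ge> 1"
  shows "distr (full_space n B P1) lborel
             (\<lambda>((D, e), P, u). pval n B A (test_stat n A S \<epsilon> D e) P u)
           = uniform_measure lborel {0..1}"
proof -
  let ?\<Omega> = "data_noise n P1"
  let ?Tf = "\<lambda>(D, e). test_stat n A S \<epsilon> D e"
  let ?Q = "distr ?\<Omega> borel ?Tf"
  let ?U = "uniform_measure lborel {0..1::real}"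
  let ?PP = "PiM {1..B} (\<lambda>_. unif_perm n)"
  let ?PQ = "PiM {1..B} (\<lambda>_. ?Q)"
  let ?gA = "\<lambda>\<pi>. A (vec_list n \<pi>)"
  let ?Psz = "compose {1..B} ?gA"
  let ?\<Psi> = "\<lambda>(x, y). (?Psz x, y)"
  let ?\<Phi> = "\<lambda>(x, y). (?Tf x, ?\<Psi> y)"
  interpret M: prob_space ?\<Omega> by (rule data_noise_prob[OF P1])
  interpret U: prob_space ?U by (rule unif_prob)
  have unifp: "prob_space (unif_perm n)" unfolding unif_perm_def by (rule prob_space_measure_pmf)
  interpret PP: prob_space ?PP by (intro prob_space_PiM unifp)
  have Qp: "prob_space ?Q" by (rule M.prob_space_distr[OF Tf_measurable])
  have Qs: "sets ?Q = sets borel" by simp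
  interpret Q: prob_space ?Q by (rule Qp)
  interpret PQ: prob_space ?PQ by (intro prob_space_PiM Qp)
  have gA_meas: "?gA \<in> measurable (unif_perm n) ?Q"
    by (simp add: unif_perm_def)
  have Qeq: "distr (unif_perm n) ?Q ?gA = ?Q"
proof -
    have "distr (unif_perm n) ?Q ?gA = distr (unif_perm n) borel ?gA"
      by (rule distr_cong) (simp_all add: Qs)
    also have "\<dots> = ?Q" using part1 by simp
    finally show ?thesis .
  qed
  have Psi0_meas: "?Psz \<in> measurable ?PP ?PQ"
    unfolding compose_def
  proof (rule measurable_restrict)
    fix i assume i: "i \<in> {1..B}"
    have "(\<lambda>P. P i) \<in> measurable ?PP (unif_perm n)" by (rule measurable_component_singleton[OF i])
    from measurable_compose[OF this gA_meas] show "(\<lambda>P. ?gA (P i)) \<in> measurable ?PP ?Q" .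
  qed
  have dPP: "distr ?PP ?PQ ?Psz = ?PQ"
proof -
    have "distr ?PP ?PQ ?Psz = PiM {1..B} (\<lambda>i. distr (unif_perm n) ?Q ?gA)"
      by (rule distr_PiM_finite_prob_space') (simp_all add: unifp Qp gA_meas unif_perm_def prob_space_measure_pmf)
    thus ?thesis using Qeq by simp
  qed
  have dPU: "distr (?PP \<Otimes>\<^sub>M ?U) (?PQ \<Otimes>\<^sub>M ?U) ?\<Psi> = ?PQ \<Otimes>\<^sub>M ?U"
proof -
    have sf: "sigma_finite_measure (distr ?U ?U (\<lambda>x. x))"
      using U.sigma_finite_measure_axioms by simp
    have "distr ?PP ?PQ ?Psz \<Otimes>\<^sub>M distr ?U ?U (\<lambda>x. x) = distr (?PP \<Otimes>\<^sub>M ?U) (?PQ \<Otimes>\<^sub>M ?U) ?\<Psi>"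
      by (rule pair_measure_distr[OF Psi0_meas measurable_id sf])
    thus ?thesis using dPP by simp
  qed
  have Psi_meas: "?\<Psi> \<in> measurable (?PP \<Otimes>\<^sub>M ?U) (?PQ \<Otimes>\<^sub>M ?U)"
proof -
    have "(\<lambda>p. (?Psz (fst p), snd p)) \<in> measurable (?PP \<Otimes>\<^sub>M ?U) (?PQ \<Otimes>\<^sub>M ?U)"
      by (rule measurable_Pair[OF measurable_compose[OF measurable_fst Psi0_meas]
                                 measurable_snd])
    moreover have "?\<Psi> = (\<lambda>p. (?Psz (fst p), snd p))" by (auto simp: fun_eq_iff)
    ultimately show ?thesis by simp
  qed
  have Tf_meas': "?Tf \<in> measurable ?\<Omega> ?Q" using Tf_measurable by simp
  have sfPU: "sigma_finite_measure (distr (?PP \<Otimes>\<^sub>M ?U) (?PQ \<Otimes>\<^sub>M ?U) ?\<Psi>)"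
    unfolding dPU by (intro prob_space_imp_sigma_finite prob_space_pair PQ.prob_space_axioms U.prob_space_axioms)
  have dAll0: "distr ?\<Omega> ?Q ?Tf \<Otimes>\<^sub>M distr (?PP \<Otimes>\<^sub>M ?U) (?PQ \<Otimes>\<^sub>M ?U) ?\<Psi>
      = distr (?\<Omega> \<Otimes>\<^sub>M (?PP \<Otimes>\<^sub>M ?U)) (?Q \<Otimes>\<^sub>M (?PQ \<Otimes>\<^sub>M ?U)) ?\<Phi>"
    by (rule pair_measure_distr[OF Tf_meas' Psi_meas sfPU])
  have dQQ: "distr ?\<Omega> ?Q ?Tf = ?Q"
    by (rule distr_cong) (simp_all add: Qs)
  have dAll: "distr (?\<Omega> \<Otimes>\<^sub>M (?PP \<Otimes>\<^sub>M ?U)) (?Q \<Otimes>\<^sub>M (?PQ \<Otimes>\<^sub>M ?U)) ?\<Phi> = ?Q \<Otimes>\<^sub>M (?PQ \<Otimes>\<^sub>M ?U)"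
    using dAll0 dQQ dPU by simp
  have Phi_meas: "?\<Phi> \<in> measurable (?\<Omega> \<Otimes>\<^sub>M (?PP \<Otimes>\<^sub>M ?U)) (?Q \<Otimes>\<^sub>M (?PQ \<Otimes>\<^sub>M ?U))"
proof -
    have "(\<lambda>p. (?Tf (fst p), ?\<Psi> (snd p))) \<in> measurable (?\<Omega> \<Otimes>\<^sub>M (?PP \<Otimes>\<^sub>M ?U)) (?Q \<Otimes>\<^sub>M (?PQ \<Otimes>\<^sub>M ?U))"
      by (rule measurable_Pair[OF measurable_compose[OF measurable_fst Tf_meas']
                                 measurable_compose[OF measurable_snd Psi_meas]])
    moreover have "?\<Phi> = (\<lambda>p. (?Tf (fst p), ?\<Psi> (snd p)))" by (auto simp: fun_eq_iff)
    ultimately show ?thesis by simp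
  qed
  have pv_meas: "(\<lambda>(t, z, u). pvg B t z u) \<in> measurable (?Q \<Otimes>\<^sub>M (?PQ \<Otimes>\<^sub>M ?U)) lborel"
    using pvg_meas[OF Qs, of B] by simp
  have heq: "(\<lambda>((D, e), P, u). pval n B A (test_stat n A S \<epsilon> D e) P u) = (\<lambda>(t, z, u). pvg B t z u) \<circ> ?\<Phi>"
  proof (rule ext)
    fix w :: "((nat \<Rightarrow> 'z) \<times> (nat \<Rightarrow> real)) \<times> (nat \<Rightarrow> nat \<Rightarrow> nat) \<times> real"
    obtain D e P u where w: "w = ((D, e), P, u)" by (cases w) auto
    have c1: "{b\<in>{1..B}. A (vec_list n (P b)) > test_stat n A S \<epsilon> D e}
        = {b\<in>{1..B}. ?Psz P b > test_stat n A S \<epsilon> D e}" by (auto simp: compose_def)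
    have c2: "{b\<in>{1..B}. A (vec_list n (P b)) = test_stat n A S \<epsilon> D e}
        = {b\<in>{1..B}. ?Psz P b = test_stat n A S \<epsilon> D e}" by (auto simp: compose_def)
    show "(\<lambda>((D, e), P, u). pval n B A (test_stat n A S \<epsilon> D e) P u) w = ((\<lambda>(t, z, u). pvg B t z u) \<circ> ?\<Phi>) w"
      unfolding w by (simp only: prod.case comp_def pval_def pvg_def c1 c2)
  qed
  have "distr (full_space n B P1) lborel (\<lambda>((D, e), P, u). pval n B A (test_stat n A S \<epsilon> D e) P u)
      = distr (?\<Omega> \<Otimes>\<^sub>M (?PP \<Otimes>\<^sub>M ?U)) lborel ((\<lambda>(t, z, u). pvg B t z u) \<circ> ?\<Phi>)"
    unfolding heq full_space_def ..
  also have "\<dots> = distr (distr (?\<Omega> \<Otimes>\<^sub>M (?PP \<Otimes>\<^sub>M ?U)) (?Q \<Otimes>\<^sub>M (?PQ \<Otimes>\<^sub>M ?U)) ?\<Phi>) lborel (\<lambda>(t, z, u). pvg B t z u)"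
    by (rule distr_distr[OF pv_meas Phi_meas, symmetric])
  also have "\<dots> = distr (?Q \<Otimes>\<^sub>M (?PQ \<Otimes>\<^sub>M ?U)) lborel (\<lambda>(t, z, u). pvg B t z u)"
    by (simp only: dAll)
  also have "\<dots> = ?U" by (rule pvg_uniform[OF Qp Qs])
  finally show ?thesis .
qed

end

theorem theorem1:
  fixes P1 :: "'z measure" and S :: "'z \<Rightarrow> (nat \<Rightarrow> 'z) \<Rightarrow> real"
    and A :: "nat list \<Rightarrow> real" and n :: nat and \<epsilon> :: real
  assumes "prob_space P1"
    and "symmetric_transformation n P1 S"
    and "\<epsilon> > 0"
  shows "distr (data_noise n P1) borel (\<lambda>(D, e). test_stat n A S \<epsilon> D e)
           = distr (unif_perm n) borel (\<lambda>\<pi>. A (vec_list n \<pi>)) \<and>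
         (\<forall>B::nat. B \<ge> 1 \<longrightarrow>
           distr (full_space n B P1) lborel
             (\<lambda>((D, e), P, u). pval n B A (test_stat n A S \<epsilon> D e) P u)
           = uniform_measure lborel {0..1})"
proof -
  interpret rkset n P1 S \<epsilon> by (rule rkset.intro) (fact assms)+
  show ?thesis using part1 part2 by blast
qed


end
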